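(* Let the setting and assumptions described in the context hold. Then for any $h>0$, any $\mathcal{F}_0$-measurable initial value $u_h^0\in L^2(\Omega,\mathcal{F}_0,\mathbb{P};\mathbb{H})$ with values in $\mathbb{V}_h$, any $r\in\mathbb{N}$ and any time step $\tau\le \frac{1}{\lambda_B}$, there exists a unique solution $\{u_h^n\}_{n=1}^N\subset \mathbb{V}_h$ of the fully discrete scheme $$\left(u_h^n-u_h^{n-1},v_h\right)_{\mathbb{H}}+\tau \langle A u_h^n,v_h\rangle_{\mathbb{V}^*\times\mathbb{V}} = \tau \langle b^n,v_h\rangle_{\mathbb{V}^*\times\mathbb{V}} + \left(\sigma^r(u_h^{n-1})\Delta_n W, v_h\right)_{\mathbb{H}}\quad\forall v_h\in\mathbb{V}_h,\ n=1,\dots,N.$$ Moreover, the $\mathbb{V}_h$-valued random variables $u_h^n$ are $\mathcal{F}_{t_n}$-measurable, $n=1,\dots,N$.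
   Context: Let $\mathcal{D}\subset\mathbb{R}^d$, $d\ge1$, be a bounded open domain with $\mathcal{C}^{1,1}$ boundary or a rectangular domain, $T>0$, $p>1$, $p'=p/(p-1)$. Let $\mathbb{H}=H^{-1}(\mathcal{D})$ (dual of $H^1_0(\mathcal{D})$) with inner product $(v,w)_{\mathbb{H}}=(v,(-\Delta)^{-1}w)_{L^2}$, where $(-\Delta)^{-1}$ is the inverse of the homogeneous Dirichlet Laplacian, and let $\mathbb{V}=L^p(\mathcal{D})\cap H^{-1}(\mathcal{D})$ with its intersection norm, so that $\mathbb{V}\hookrightarrow\mathbb{H}\equiv\mathbb{H}^*\hookrightarrow\mathbb{V}^*$ is a Gelfand triple. Let $(\Omega,\mathcal{F},\{\mathcal{F}_t\},\mathbb{P})$ be a filtered probability space, $\mathbb{K}$ a real separable Hilbert space with orthonormal basis $\{\tilde e_i\}$, and $W=\sum_i\tilde e_i\beta_i$ a cylindrical Wiener process on $\mathbb{K}$ with independent Brownian motions $\beta_i$. $L_2(\mathbb{K},\mathbb{H})$ denotes the Hilbert–Schmidt operators. Let $\alpha:\mathbb{R}\to\mathbb{R}$ be continuous, monotonically increasing, with $\alpha(z)z\ge\mu|z|^p-\lambda$ and $|\alpha(z)|\le c(|z|+1)^{p-1}$, and define $A:\mathbb{V}\to\mathbb{V}^*$ by $\langle Au,v\rangle=(\alpha(u),v)_{L^2}$. Let $\sigma:\mathbb{V}\to L_2(\mathbb{K},\mathbb{H})$. Assume: (i) $\epsilon\mapsto\langle A(w+\epsilon z),v\rangle$ is continuous on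 $[0,1]$ for all $v,w,z\in\mathbb{V}$; (ii) there is $\lambda_B\ge0$ with $2\langle Av-Aw,v-w\rangle+\lambda_B\|v-w\|_{\mathbb{H}}^2\ge\|\sigma(v)-\sigma(w)\|_{L_2(\mathbb{K},\mathbb{H})}^2$ for all $v,w\in\mathbb{V}$; (iii) there are $\mu>0$, $\lambda,\lambda_A,\kappa_\sigma\ge0$ with $\langle Av,v\rangle+\lambda_A\|v\|_{\mathbb{H}}^2\ge\mu\|v\|_{\mathbb{V}}^p-\lambda|\mathcal{D}|+\frac12\|\sigma(v)\|_{L_2(\mathbb{K},\mathbb{H})}^2-\kappa_\sigma$ for all $v\in\mathbb{V}$; (iv) $\|Av\|_{\mathbb{V}^*}\le C(\|v\|_{\mathbb{V}}+1)^{p-1}$ for all $v\in\mathbb{V}$. Let $f\in L^\infty(\Omega\times(0,T)\times\mathcal{D})$, $g\in L^\infty(\Omega\times(0,T)\times\partial\mathcal{D})$ be progressively measurable, and define $b(s)\in\mathbb{V}^*$ by $\langle b(s),v\rangle=(f(s),(-\Delta)^{-1}v)_{L^2}-(g(s),\partial_{\vec n}(-\Delta)^{-1}v)_{L^2(\partial\mathcal{D})}$. Let $(\mathbb{V}_h)_{h>0}$ be finite-dimensional subspaces of $\mathbb{V}$. Time discretization: $\tau=T/N$, $t_n=n\tau$; $b^n=\frac1\tau\int_{t_{n-1}}^{t_n}b(t)\,dt$; $\Delta_1\beta_i=0$ and $\Delta_n\beta_i=\beta_i(t_n)-\beta_i(t_{n-1})$ for $n\ge2$, $\Delta_nW=\sum_i\tilde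 e_i\Delta_n\beta_i$; for $r\in\mathbb{N}$, $\sigma^r(u)w=\sum_{i=1}^r\sigma(u)\tilde e_i(w,\tilde e_i)_{\mathbb{K}}$. *)

theory Defs
  imports "HOL-Probability.Probability"
begin

text \<open>The pivot Hilbert space H is a type
 'h of class real_inner + complete_space; the reflexive Banach space V is a
 dense linear subspace V of H with its own norm nV, continuously embedded.\<close>

definition banach_subspace :: "'h::{real_inner,complete_space} set \<Rightarrow> ('h \<Rightarrow> real) \<Rightarrow> bool" where
  "banach_subspace V nV \<longleftrightarrow>
     subspace V \<and>
     (\<forall>v\<in>V. 0 \<le> nV v) \<and> (\<forall>v\<in>V. nV v = 0 \<longleftrightarrow> v = 0) \<and>
     (\<forall>v\<in>V. \<forall>c::real. nV (c *\<^sub>R v) = \<bar>c\<bar> * nV v) \<and>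
     (\<forall>v\<in>V. \<forall>w\<in>V. nV (v + w) \<le> nV v + nV w) \<and>
     (\<forall>X. (\<forall>k. X k \<in> V) \<and> (\<forall>e>0. \<exists>K. \<forall>m\<ge>K. \<forall>n\<ge>K. nV (X m - X n) < e)
          \<longrightarrow> (\<exists>x\<in>V. (\<lambda>k. nV (X k - x)) \<longlonglongrightarrow> 0)) \<and>
     (\<exists>cE>0. \<forall>v\<in>V. norm v \<le> cE * nV v) \<and>
     closure V = UNIV"

text \<open>Squared Hilbert--Schmidt norm of sigma(v) w.r.t. the orthonormal basis
 e_0, e_1, ... of K: the operator sigma(v) is represented by its values
 sig v i = sigma(v) e_i in H.\<close>

definition hs_norm2 :: "(nat \<Rightarrow> 'h::real_inner) \<Rightarrow> real" where
  "hs_norm2 s = (\<Sum>i. (norm (s i))\<^sup>2)"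

definition brownian_motion :: "'w measure \<Rightarrow> (real \<Rightarrow> 'w measure) \<Rightarrow> (real \<Rightarrow> 'w \<Rightarrow> real) \<Rightarrow> bool" where
  "brownian_motion M F \<beta> \<longleftrightarrow>
     (\<forall>t\<ge>0. \<beta> t \<in> borel_measurable (F t)) \<and>
     (\<forall>\<omega>\<in>space M. \<beta> 0 \<omega> = 0) \<and>
     (\<forall>\<omega>\<in>space M. continuous_on {0..} (\<lambda>t. \<beta> t \<omega>)) \<and>
     (\<forall>s t. 0 \<le> s \<and> s < t \<longrightarrow>
        distributed M lborel (\<lambda>\<omega>. \<beta> t \<omega> - \<beta> s \<omega>) (\<lambda>x. ennreal (normal_density 0 (sqrt (t - s)) x)) \<and>
        (\<forall>A\<in>sets (F s). \<forall>B\<in>sets borel.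
           measure M (A \<inter> ((\<lambda>\<omega>. \<beta> t \<omega> - \<beta> s \<omega>) -` B \<inter> space M)) =
           measure M A * measure M ((\<lambda>\<omega>. \<beta> t \<omega> - \<beta> s \<omega>) -` B \<inter> space M)))"

text \<open>Time average b^n of the right-hand side b over (t_{n-1}, t_n),
 acting on v (Bochner average in V*, evaluated weakly).\<close>

definition b_avg :: "('w \<Rightarrow> real \<Rightarrow> 'h \<Rightarrow> real) \<Rightarrow> real \<Rightarrow> 'w \<Rightarrow> nat \<Rightarrow> 'h \<Rightarrow> real" where
  "b_avg b \<tau> \<omega> n v = (1 / \<tau>) * (LBINT s=real (n - 1) * \<tau>..real n * \<tau>. b \<omega> s v)"

definition dBeta :: "(nat \<Rightarrow> real \<Rightarrow> 'w \<Rightarrow> real) \<Rightarrow> real \<Rightarrow> nat \<Rightarrow> nat \<Rightarrow> 'w \<Rightarrow> real" where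
  "dBeta \<beta> \<tau> n i \<omega> = (if n \<le> 1 then 0 else \<beta> i (real n * \<tau>) \<omega> - \<beta> i (real (n - 1) * \<tau>) \<omega>)"

text \<open>u solves the fully discrete scheme (pathwise, for every omega) for n = 1..N,
 with u^0 = u0 and noise truncated to the first r basis directions.\<close>

definition discrete_solution ::
  "'w measure \<Rightarrow> 'h::real_inner set \<Rightarrow> ('h \<Rightarrow> 'h \<Rightarrow> real) \<Rightarrow> ('w \<Rightarrow> real \<Rightarrow> 'h \<Rightarrow> real) \<Rightarrow>
   ('h \<Rightarrow> nat \<Rightarrow> 'h) \<Rightarrow> (nat \<Rightarrow> real \<Rightarrow> 'w \<Rightarrow> real) \<Rightarrow> nat \<Rightarrow> real \<Rightarrow> nat \<Rightarrow>
   ('w \<Rightarrow> 'h) \<Rightarrow> (nat \<Rightarrow> 'w \<Rightarrow> 'h) \<Rightarrow> bool" where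
  "discrete_solution M Vh A b sig \<beta> N \<tau> r u0 u \<longleftrightarrow>
     (\<forall>\<omega>\<in>space M. u 0 \<omega> = u0 \<omega>) \<and>
     (\<forall>n\<in>{1..N}. \<forall>\<omega>\<in>space M. u n \<omega> \<in> Vh \<and>
        (\<forall>v\<in>Vh. inner (u n \<omega> - u (n - 1) \<omega>) v + \<tau> * A (u n \<omega>) v =
                 \<tau> * b_avg b \<tau> \<omega> n v
                 + (\<Sum>i<r. dBeta \<beta> \<tau> n i \<omega> * inner (sig (u (n - 1) \<omega>) i) v)))"

end

theory Submission
  imports Defs
begin


definition orthonormal_set :: "'h::real_inner set \<Rightarrow> bool" where
  "orthonormal_set E \<longleftrightarrow> finite E \<and> (\<forall>e\<in>E. norm e = 1) \<and> (\<forall>x\<in>E. \<forall>y\<in>E. x \<noteq> y \<longrightarrow> inner x y = 0)"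

lemma orth_span_zero:
  fixes E :: "'h::real_inner set"
  assumes "\<And>y. y \<in> E \<Longrightarrow> inner x y = 0" "a \<in> span E"
  shows "inner x a = 0"
  using orthogonal_to_span[of a E x] assms unfolding orthogonal_def by blast

lemma span_insert_scale:
  fixes a :: "'h::real_vector"
  assumes "c \<noteq> 0"
  shows "span (insert (c *\<^sub>R a) E) = span (insert a E)"
proof -
  have "(\<exists>k. x - k *\<^sub>R (c *\<^sub>R a) \<in> span E) \<longleftrightarrow> (\<exists>k. x - k *\<^sub>R a \<in> span E)" for x
  proof
    assume "\<exists>k. x - k *\<^sub>R (c *\<^sub>R a) \<in> span E"
    then show "\<exists>k. x - k *\<^sub>R a \<in> span E" by (metis scaleR_scaleR)
  next
    assume "\<exists>k. x - k *\<^sub>R a \<in> span E"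
    then obtain k where "x - k *\<^sub>R a \<in> span E" by blast
    moreover have "(k / c) *\<^sub>R (c *\<^sub>R a) = k *\<^sub>R a" using assms by simp
    ultimately show "\<exists>k. x - k *\<^sub>R (c *\<^sub>R a) \<in> span E" by metis
  qed
  then show ?thesis unfolding span_insert by blast
qed

lemma gram_schmidt:
  fixes T :: "'h::real_inner set"
  assumes "finite T"
  shows "\<exists>E. orthonormal_set E \<and> span E = span T"
  using assms
proof (induction T)
  case empty
  then show ?case by (rule exI[of _ "{}"]) (simp add: orthonormal_set_def)
next
  case (insert a T)
  then obtain E where E: "orthonormal_set E" "span E = span T" by blast
  define a' where "a' = a - (\<Sum>b\<in>E. inner b a *\<^sub>R b)"
  have fE: "finite E" using E unfolding orthonormal_set_def by blast
  have sumE: "(\<Sum>b\<in>E. inner b a *\<^sub>R b) \<in> span E"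
    by (simp add: span_sum span_scale span_base)
  have orth: "inner a' y = 0" if "y \<in> E" for y
  proof -
    have "inner (\<Sum>b\<in>E. inner b a *\<^sub>R b) y = (\<Sum>b\<in>E. inner b a * inner b y)"
      by (simp add: inner_sum_left)
    also have "\<dots> = (\<Sum>b\<in>E. if b = y then inner y a else 0)"
      apply (rule sum.cong[OF refl])
      using E that unfolding orthonormal_set_def
      by (auto simp: dot_square_norm)
    also have "\<dots> = inner y a" using fE that by simp
    finally have "inner (\<Sum>b\<in>E. inner b a *\<^sub>R b) y = inner a y" by (simp add: inner_commute)
    then show ?thesis unfolding a'_def by (simp only: inner_diff_left)
  qed
  show ?case
  proof (cases "a' = 0")
    case True
    then have "a \<in> span E" using sumE unfolding a'_def by simp
    then have "span (insert a T) = span T"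
      using E(2) by (simp add: span_redundant)
    then show ?thesis using E by blast
  next
    case False
    define e where "e = (1 / norm a') *\<^sub>R a'"
    have ne: "norm e = 1" using False by (simp add: e_def)
    have orth2: "inner e y = 0" if "y \<in> E" for y
      using orth[OF that] by (simp add: e_def)
    have eE: "e \<notin> E"
    proof
      assume "e \<in> E"
      then have "inner e e = 0" using orth2 by blast
      then show False using ne by simp
    qed
    have "orthonormal_set (insert e E)"
      using E ne orth2 eE unfolding orthonormal_set_def
      by (auto simp: inner_commute)
    moreover have "span (insert e E) = span (insert a E)"
    proof -
      have "span (insert e E) = span (insert a' E)"
        unfolding e_def using False
        using span_insert_scale[of "1 / norm a'" a' E] False by simp
      also have "\<dots> = span (insert a E)"
        by (rule eq_span_insert_eq) (simp add: a'_def sumE span_neg)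
      finally show ?thesis .
    qed
    moreover have "span (insert a E) = span (insert a T)"
      using E(2) by (metis span_insert)
    ultimately show ?thesis by metis
  qed
qed

lemma lin_zero:
  fixes g :: "'a::real_vector \<Rightarrow> real"
  assumes "\<forall>x\<in>S. \<forall>y\<in>S. \<forall>c. g (c *\<^sub>R x + y) = c * g x + g y" "0 \<in> S"
  shows "g 0 = (0::real)"
proof -
  have "g (1 *\<^sub>R 0 + 0) = 1 * g 0 + g 0" using assms by blast
  moreover have "(1::real) *\<^sub>R (0::'a) + 0 = 0" by simp
  ultimately show ?thesis by simp
qed

lemma exist_ind:
  fixes E :: "'h::real_inner set" and cc :: real
  assumes fin: "finite E" and oE: "orthonormal_set E" and cc: "cc > 0"
    and "\<forall>u\<in>span E. \<forall>x\<in>span E. \<forall>y\<in>span E. \<forall>c. f u (c *\<^sub>R x + y) = c * f u x + f u y"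
    and "\<forall>x\<in>span E. \<forall>y\<in>span E. \<forall>c. g (c *\<^sub>R x + y) = c * g x + g y"
    and "\<forall>u\<in>span E. \<forall>u'\<in>span E. f u (u - u') - f u' (u - u') \<ge> cc * (norm (u - u'))\<^sup>2"
    and "\<forall>v\<in>span E. continuous_on (span E) (\<lambda>u. f u v)"
  shows "\<exists>u\<in>span E. \<forall>v\<in>span E. f u v = g v"
  using fin oE assms(4-7)
  proof (induction E arbitrary: f g rule: finite_induct)
    case empty
    have "f 0 0 = 0" using lin_zero[of "span {}" "f 0"] empty.prems(2) span_zero by blast
    moreover have "g 0 = 0" using lin_zero[of "span {}" g] empty.prems(3) span_zero by blast
    ultimately show ?case by auto
  next
    case (insert e E f g)
    let ?W = "span (insert e E)" and ?W' = "span E"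
    have onE: "orthonormal_set E" and ne: "norm e = 1" and orth_e: "\<And>y. y \<in> E \<Longrightarrow> inner e y = 0"
      using insert.prems(1) insert.hyps(2) unfolding orthonormal_set_def by auto
    have eW': "\<And>w. w \<in> ?W' \<Longrightarrow> inner e w = 0" using orth_e orth_span_zero by blast
    have sub: "?W' \<subseteq> ?W" by (simp add: span_mono subset_insertI)
    have eW: "e \<in> ?W" by (simp add: span_base)
    have flin: "\<And>u x y c. u \<in> ?W \<Longrightarrow> x \<in> ?W \<Longrightarrow> y \<in> ?W \<Longrightarrow> f u (c *\<^sub>R x + y) = c * f u x + f u y"
      using insert.prems(2) by blast
    have glin: "\<And>x y c. x \<in> ?W \<Longrightarrow> y \<in> ?W \<Longrightarrow> g (c *\<^sub>R x + y) = c * g x + g y"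
      using insert.prems(3) by blast
    have fmono: "\<And>u u'. u \<in> ?W \<Longrightarrow> u' \<in> ?W \<Longrightarrow> f u (u - u') - f u' (u - u') \<ge> cc * (norm (u - u'))\<^sup>2"
      using insert.prems(4) by blast
    have fcont: "\<And>v. v \<in> ?W \<Longrightarrow> continuous_on ?W (\<lambda>u. f u v)"
      using insert.prems(5) by blast
    have shift: "x + s *\<^sub>R e \<in> ?W" if "x \<in> ?W'" for x s
      using that sub eW by (meson span_add span_scale subsetD)
    have "\<exists>x\<in>?W'. \<forall>v\<in>?W'. f (x + s *\<^sub>R e) v = g v" for s
    proof (rule insert.IH[OF onE])
      show "\<forall>u\<in>?W'. \<forall>x\<in>?W'. \<forall>y\<in>?W'. \<forall>c. f (u + s *\<^sub>R e) (c *\<^sub>R x + y) = c * f (u + s *\<^sub>R e) x + f (u + s *\<^sub>R e) y"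
        using flin shift sub by blast
      show "\<forall>x\<in>?W'. \<forall>y\<in>?W'. \<forall>c. g (c *\<^sub>R x + y) = c * g x + g y"
        using glin sub by blast
      show "\<forall>u\<in>?W'. \<forall>u'\<in>?W'. f (u + s *\<^sub>R e) (u - u') - f (u' + s *\<^sub>R e) (u - u') \<ge> cc * (norm (u - u'))\<^sup>2"
      proof (intro ballI)
        fix u u' assume uu: "u \<in> ?W'" "u' \<in> ?W'"
        show "f (u + s *\<^sub>R e) (u - u') - f (u' + s *\<^sub>R e) (u - u') \<ge> cc * (norm (u - u'))\<^sup>2"
          using fmono[OF shift[OF uu(1)] shift[OF uu(2)], of s s] by simp
      qed
      show "\<forall>v\<in>?W'. continuous_on ?W' (\<lambda>u. f (u + s *\<^sub>R e) v)"
      proof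
        fix v assume "v \<in> ?W'"
        then have "continuous_on ?W (\<lambda>u. f u v)" using fcont sub by blast
        moreover have "continuous_on ?W' (\<lambda>u. u + s *\<^sub>R e)" by (intro continuous_intros)
        moreover have "(\<lambda>u. u + s *\<^sub>R e) ` ?W' \<subseteq> ?W" using shift by blast
        ultimately show "continuous_on ?W' (\<lambda>u. f (u + s *\<^sub>R e) v)"
          using continuous_on_compose2 by blast
      qed
    qed
    then obtain X where X: "\<And>s. X s \<in> ?W'" "\<And>s v. v \<in> ?W' \<Longrightarrow> f (X s + s *\<^sub>R e) v = g v"
      by metis
    define U where "U s = X s + s *\<^sub>R e" for s
    define h where "h s = f (U s) e - g e" for s
    have UW: "U s \<in> ?W" for s unfolding U_def using shift X(1) by blast
    have key: "(s - s') * (h s - h s') \<ge> cc * ((norm (X s - X s'))\<^sup>2 + (s - s')\<^sup>2)" for s s'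
    proof -
      define D where "D = X s - X s'"
      have DW': "D \<in> ?W'" unfolding D_def using X(1) by (simp add: span_diff)
      have DW: "D \<in> ?W" using DW' sub by blast
      have UD: "U s - U s' = (s - s') *\<^sub>R e + D" unfolding U_def D_def by (simp add: algebra_simps)
      have f1: "f (U s) (U s - U s') = (s - s') * f (U s) e + f (U s) D"
        unfolding UD by (rule flin[OF UW eW DW])
      have f2: "f (U s') (U s - U s') = (s - s') * f (U s') e + f (U s') D"
        unfolding UD by (rule flin[OF UW eW DW])
      have f3: "f (U s) D = g D" "f (U s') D = g D" using X(2)[OF DW'] unfolding U_def by auto
      have "orthogonal ((s - s') *\<^sub>R e) D" using eW'[OF DW'] unfolding orthogonal_def by simp
      then have n0: "(norm (U s - U s'))\<^sup>2 = (norm ((s - s') *\<^sub>R e))\<^sup>2 + (norm D)\<^sup>2"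
        unfolding UD by (rule norm_add_Pythagorean)
      have "(norm ((s - s') *\<^sub>R e))\<^sup>2 = (s - s')\<^sup>2" using ne by (simp add: power2_abs)
      with n0 have n: "(norm (U s - U s'))\<^sup>2 = (s - s')\<^sup>2 + (norm D)\<^sup>2" by simp
      have "f (U s) (U s - U s') - f (U s') (U s - U s') = (s - s') * (h s - h s')"
        unfolding f1 f2 f3 h_def by (simp add: algebra_simps)
      with fmono[OF UW UW, of s s'] n show ?thesis unfolding D_def by (simp add: add.commute)
    qed
    have hmono: "h s - h s' \<ge> cc * (s - s')" if "s' < s" for s s'
    proof -
      have "(s - s') * (cc * (s - s')) = cc * (s - s')\<^sup>2" by (simp add: power2_eq_square)
      also have "\<dots> \<le> cc * ((norm (X s - X s'))\<^sup>2 + (s - s')\<^sup>2)" using cc by simp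
      also have "\<dots> \<le> (s - s') * (h s - h s')" by (rule key)
      finally show ?thesis using that by (simp add: mult_le_cancel_left)
    qed
    have hmono': "h s' \<le> h s" if "s' \<le> s" for s s'
    proof (cases "s' = s")
      case False
      then have "h s - h s' \<ge> cc * (s - s')" using hmono that by simp
      moreover have "cc * (s - s') \<ge> 0" using cc that by simp
      ultimately show ?thesis by linarith
    qed simp
    have Xcont: "isCont X s0" for s0
      unfolding continuous_at_eps_delta
    proof (intro allI impI)
      fix \<epsilon> :: real assume ep: "\<epsilon> > 0"
      define K where "K = h (s0 + 1) - h (s0 - 1)"
      have K0: "K \<ge> 0" unfolding K_def using hmono'[of "s0 - 1" "s0 + 1"] by simp
      define d where "d = min 1 (cc * \<epsilon>\<^sup>2 / (K + 1))"
      have d0: "d > 0" unfolding d_def using cc ep K0 by auto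
      have "dist (X s) (X s0) < \<epsilon>" if "dist s s0 < d" for s
      proof -
        have s1: "\<bar>s - s0\<bar> < d" using that by (simp add: dist_real_def)
        then have "\<bar>s - s0\<bar> \<le> 1" unfolding d_def by simp
        then have a1: "s0 - 1 \<le> s" and a2: "s \<le> s0 + 1" by linarith+
        have "h (s0 - 1) \<le> h s" using hmono'[OF a1] .
        moreover have "h s \<le> h (s0 + 1)" using hmono'[OF a2] .
        moreover have "h (s0 - 1) \<le> h s0" using hmono'[of "s0 - 1" s0] by simp
        moreover have "h s0 \<le> h (s0 + 1)" using hmono'[of s0 "s0 + 1"] by simp
        ultimately have hb: "\<bar>h s - h s0\<bar> \<le> K" unfolding K_def by linarith
        have "cc * (norm (X s - X s0))\<^sup>2 \<le> cc * ((norm (X s - X s0))\<^sup>2 + (s - s0)\<^sup>2)"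
          using cc by simp
        also have "\<dots> \<le> (s - s0) * (h s - h s0)" by (rule key)
        also have "\<dots> \<le> \<bar>(s - s0) * (h s - h s0)\<bar>" by (rule abs_ge_self)
        also have "\<dots> = \<bar>s - s0\<bar> * \<bar>h s - h s0\<bar>" by (rule abs_mult)
        also have "\<dots> \<le> \<bar>s - s0\<bar> * K" using hb by (simp add: mult_left_mono)
        also have "\<dots> \<le> d * K" using s1 K0 by (simp add: mult_right_mono)
        also have "\<dots> \<le> cc * \<epsilon>\<^sup>2 / (K + 1) * K"
          using K0 unfolding d_def by (intro mult_right_mono) auto
        also have "\<dots> = cc * \<epsilon>\<^sup>2 * (K / (K + 1))" by simp
        also have "\<dots> < cc * \<epsilon>\<^sup>2"
        proof -
          have "K / (K + 1) < 1" using K0 by simp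
          moreover have "cc * \<epsilon>\<^sup>2 > 0" using cc ep by simp
          ultimately show ?thesis using mult_strict_left_mono[of "K / (K + 1)" 1 "cc * \<epsilon>\<^sup>2"] by simp
        qed
        finally have "(norm (X s - X s0))\<^sup>2 < \<epsilon>\<^sup>2" using cc by simp
        then show ?thesis using ep by (simp add: dist_norm power_less_imp_less_base)
      qed
      then show "\<exists>d>0. \<forall>s. dist s s0 < d \<longrightarrow> dist (X s) (X s0) < \<epsilon>" using d0 by blast
    qed
    have Ucont: "continuous_on UNIV U"
      unfolding U_def using Xcont by (intro continuous_intros) (simp add: continuous_at_imp_continuous_on)
    have hcont: "continuous_on UNIV h"
    proof -
      have "continuous_on UNIV (\<lambda>s. f (U s) e)"
        using continuous_on_compose2[OF fcont[OF eW] Ucont] UW by blast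
      then show ?thesis unfolding h_def by (intro continuous_intros)
    qed
    have "\<exists>s. h s = 0"
    proof (cases "h 0 \<le> 0")
      case True
      define b where "b = - h 0 / cc"
      have b0: "b \<ge> 0" using True cc unfolding b_def by (simp add: divide_nonpos_pos)
      have "h b \<ge> 0"
      proof (cases "b = 0")
        case True then show ?thesis using \<open>b \<ge> 0\<close> unfolding b_def using cc by simp
      next
        case False
        then have "h b - h 0 \<ge> cc * b" using hmono[of 0 b] b0 by simp
        then show ?thesis unfolding b_def using cc by simp
      qed
      then show ?thesis using IVT'[of h 0 0 b] True b0 continuous_on_subset[OF hcont] by blast
    next
      case False
      define a where "a = - h 0 / cc"
      have a0: "a < 0" using False cc unfolding a_def by simp
      then have "h 0 - h a \<ge> cc * (0 - a)" using hmono[of a 0] by simp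
      then have "h a \<le> 0" unfolding a_def using cc by simp
      then show ?thesis using IVT'[of h a 0 0] False a0 continuous_on_subset[OF hcont] by fastforce
    qed
    then obtain s where hs: "h s = 0" by blast
    show ?case
    proof (intro bexI[of _ "U s"] ballI)
      fix v assume vW: "v \<in> ?W"
      then obtain k where k: "v - k *\<^sub>R e \<in> ?W'" using span_breakdown_eq by blast
      have v: "v = k *\<^sub>R e + (v - k *\<^sub>R e)" by simp
      have "f (U s) v = k * f (U s) e + f (U s) (v - k *\<^sub>R e)"
        by (subst v, rule flin[OF UW eW]) (use k sub in blast)
      also have "\<dots> = k * g e + g (v - k *\<^sub>R e)"
        using hs X(2)[OF k] unfolding h_def U_def by simp
      also have "\<dots> = g v"
        using glin[OF eW, of "v - k *\<^sub>R e" k] k sub by auto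
      finally show "f (U s) v = g v" .
    qed (rule UW)
  qed



lemma expand:
  fixes E :: "'h::real_inner set"
  assumes oE: "orthonormal_set E" and x: "x \<in> span E"
  shows "x = (\<Sum>e\<in>E. inner x e *\<^sub>R e)"
proof -
  have fE: "finite E" using oE unfolding orthonormal_set_def by blast
  obtain c where c: "x = (\<Sum>v\<in>E. c v *\<^sub>R v)" using x span_finite[OF fE] by auto
  have "inner x e = c e" if "e \<in> E" for e
  proof -
    have "inner x e = (\<Sum>v\<in>E. c v * inner v e)" unfolding c by (simp add: inner_sum_left)
    also have "\<dots> = (\<Sum>v\<in>E. if v = e then c e else 0)"
      apply (rule sum.cong[OF refl])
      using oE that unfolding orthonormal_set_def by (auto simp: dot_square_norm)
    also have "\<dots> = c e" using fE that by simp
    finally show ?thesis .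
  qed
  then have "(\<Sum>e\<in>E. inner x e *\<^sub>R e) = (\<Sum>e\<in>E. c e *\<^sub>R e)" by (intro sum.cong) auto
  then show ?thesis using c by simp
qed

lemma lin_sum:
  fixes g :: "'h::real_vector \<Rightarrow> real"
  assumes "finite S" "S \<subseteq> W" "subspace W"
    and lin: "\<forall>x\<in>W. \<forall>y\<in>W. \<forall>c. g (c *\<^sub>R x + y) = c * g x + g y"
  shows "g (\<Sum>e\<in>S. c e *\<^sub>R e) = (\<Sum>e\<in>S. c e * g e)"
  using assms(1,2)
proof (induction S rule: finite_induct)
  case empty
  then show ?case using lin_zero[OF lin] assms(3) subspace_0 by auto
next
  case (insert a S)
  have "(\<Sum>e\<in>S. c e *\<^sub>R e) \<in> W"
    by (rule subspace_sum[OF assms(3)]) (use insert in \<open>auto intro: subspace_scale[OF assms(3)]\<close>)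
  then have "g (c a *\<^sub>R a + (\<Sum>e\<in>S. c e *\<^sub>R e)) = c a * g a + g (\<Sum>e\<in>S. c e *\<^sub>R e)"
    using lin insert by blast
  then show ?case using insert by simp
qed

lemma nV_props:
  assumes "banach_subspace V nV"
  shows "subspace V" "\<And>v. v \<in> V \<Longrightarrow> 0 \<le> nV v"
    "\<And>v c. v \<in> V \<Longrightarrow> nV (c *\<^sub>R v) = \<bar>c\<bar> * nV v"
    "\<And>v w. v \<in> V \<Longrightarrow> w \<in> V \<Longrightarrow> nV (v + w) \<le> nV v + nV w"
  using assms unfolding banach_subspace_def by auto

lemma nV_sum:
  assumes V: "banach_subspace V nV" and "finite S" "S \<subseteq> V"
  shows "nV (\<Sum>e\<in>S. c e *\<^sub>R e) \<le> (\<Sum>e\<in>S. \<bar>c e\<bar> * nV e)"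
  using assms(2,3)
proof (induction S rule: finite_induct)
  case empty
  have "nV 0 = 0" using nV_props(3)[OF V, of 0 0] nV_props(1)[OF V] subspace_0 by fastforce
  then show ?case by simp
next
  case (insert a S)
  have sV: "(\<Sum>e\<in>S. c e *\<^sub>R e) \<in> V"
    by (rule subspace_sum[OF nV_props(1)[OF V]]) (use insert in \<open>auto intro: subspace_scale[OF nV_props(1)[OF V]]\<close>)
  have aV: "c a *\<^sub>R a \<in> V" using insert nV_props(1)[OF V] by (simp add: subspace_scale)
  have "nV (\<Sum>e\<in>insert a S. c e *\<^sub>R e) = nV (c a *\<^sub>R a + (\<Sum>e\<in>S. c e *\<^sub>R e))" using insert by simp
  also have "\<dots> \<le> nV (c a *\<^sub>R a) + nV (\<Sum>e\<in>S. c e *\<^sub>R e)" by (rule nV_props(4)[OF V aV sV])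
  also have "\<dots> \<le> \<bar>c a\<bar> * nV a + (\<Sum>e\<in>S. \<bar>c e\<bar> * nV e)"
    using insert nV_props(3)[OF V] by auto
  finally show ?case using insert by simp
qed

lemma nV_equiv:
  assumes V: "banach_subspace V nV" and oE: "orthonormal_set E" and sub: "span E \<subseteq> V"
    and x: "x \<in> span E"
  shows "nV x \<le> (\<Sum>e\<in>E. nV e) * norm x"
proof -
  have fE: "finite E" and nE: "\<And>e. e \<in> E \<Longrightarrow> norm e = 1" using oE unfolding orthonormal_set_def by auto
  have EV: "E \<subseteq> V" using sub span_base by blast
  have "nV x = nV (\<Sum>e\<in>E. inner x e *\<^sub>R e)" using expand[OF oE x] by simp
  also have "\<dots> \<le> (\<Sum>e\<in>E. \<bar>inner x e\<bar> * nV e)" by (rule nV_sum[OF V fE EV])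
  also have "\<dots> \<le> (\<Sum>e\<in>E. norm x * nV e)"
  proof (rule sum_mono)
    fix e assume e: "e \<in> E"
    have "\<bar>inner x e\<bar> \<le> norm x" using Cauchy_Schwarz_ineq2[of x e] nE[OF e] by simp
    then show "\<bar>inner x e\<bar> * nV e \<le> norm x * nV e"
      using nV_props(2)[OF V] EV e by (simp add: mult_right_mono subsetD)
  qed
  also have "\<dots> = norm x * (\<Sum>e\<in>E. nV e)" by (rule sum_distrib_left[symmetric])
  also have "\<dots> = (\<Sum>e\<in>E. nV e) * norm x" by (rule mult.commute)
  finally show ?thesis .
qed

lemma hs_diff:
  fixes s t :: "nat \<Rightarrow> 'h::real_inner"
  assumes "summable (\<lambda>i. (norm (s i))\<^sup>2)" "summable (\<lambda>i. (norm (t i))\<^sup>2)"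
  shows "summable (\<lambda>i. (norm (s i - t i))\<^sup>2)" "hs_norm2 (\<lambda>i. s i - t i) \<ge> 0"
    "\<And>j. (norm (s j - t j))\<^sup>2 \<le> hs_norm2 (\<lambda>i. s i - t i)"
proof -
  have b: "norm ((norm (s i - t i))\<^sup>2) \<le> 2 * (norm (s i))\<^sup>2 + 2 * (norm (t i))\<^sup>2" for i
  proof -
    have "norm (s i - t i) \<le> norm (s i) + norm (t i)" by (rule norm_triangle_ineq4)
    then have "(norm (s i - t i))\<^sup>2 \<le> (norm (s i) + norm (t i))\<^sup>2" by (simp add: power_mono)
    also have "\<dots> \<le> 2 * (norm (s i))\<^sup>2 + 2 * (norm (t i))\<^sup>2"
    proof -
      have "(norm (s i) + norm (t i))\<^sup>2 + (norm (s i) - norm (t i))\<^sup>2 = 2 * (norm (s i))\<^sup>2 + 2 * (norm (t i))\<^sup>2"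
        by (simp add: power2_eq_square algebra_simps)
      moreover have "0 \<le> (norm (s i) - norm (t i))\<^sup>2" by simp
      ultimately show ?thesis by linarith
    qed
    finally show ?thesis by simp
  qed
  have sg: "summable (\<lambda>i. 2 * (norm (s i))\<^sup>2 + 2 * (norm (t i))\<^sup>2)"
    by (intro summable_add summable_mult assms)
  show sm: "summable (\<lambda>i. (norm (s i - t i))\<^sup>2)"
    by (rule summable_comparison_test'[OF sg b])
  show "hs_norm2 (\<lambda>i. s i - t i) \<ge> 0" unfolding hs_norm2_def by (rule suminf_nonneg[OF sm]) simp
  fix j
  have "sum (\<lambda>i. (norm (s i - t i))\<^sup>2) {j} \<le> suminf (\<lambda>i. (norm (s i - t i))\<^sup>2)"
    by (rule sum_le_suminf[OF sm]) auto
  then show "(norm (s j - t j))\<^sup>2 \<le> hs_norm2 (\<lambda>i. s i - t i)" unfolding hs_norm2_def by simp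
qed

lemma arith_cont:
  fixes t a a0 aw X \<delta> K0 Kw lB Z \<epsilon> :: real
  assumes t: "t > 0" and X: "0 \<le> X" "X \<le> \<delta>" "\<delta> \<le> 1" and K: "K0 \<ge> 0" "Kw \<ge> 0" "lB \<ge> 0" "Z \<ge> 0"
    and d: "\<delta> * (K0 + Kw + lB + 1) \<le> t * \<epsilon> / 4"
    and main: "t * a \<le> (K0 + Kw) * X + t * aw + lB * (X\<^sup>2 + t\<^sup>2 * Z)"
    and ep: "\<epsilon> > 0" and aw: "aw < a0 + \<epsilon> / 4" and lz: "lB * t * Z \<le> \<epsilon> / 4"
  shows "a < a0 + \<epsilon>"
proof -
  have "X\<^sup>2 \<le> X" using X by (simp add: power2_eq_square mult_left_le_one_le)
  then have "lB * X\<^sup>2 \<le> lB * X" using K by (simp add: mult_left_mono)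
  then have "(K0 + Kw) * X + lB * X\<^sup>2 \<le> (K0 + Kw + lB + 1) * X" using K X
    by (simp add: algebra_simps)
  also have "\<dots> \<le> (K0 + Kw + lB + 1) * \<delta>" using K X by (simp add: mult_left_mono)
  also have "\<dots> \<le> t * \<epsilon> / 4" using d by (simp add: mult.commute)
  finally have 1: "(K0 + Kw) * X + lB * X\<^sup>2 \<le> t * \<epsilon> / 4" .
  have 2: "lB * (t\<^sup>2 * Z) = t * (lB * t * Z)" by (simp add: power2_eq_square)
  have "t * a \<le> t * (\<epsilon> / 4) + t * aw + t * (lB * t * Z)"
    using main 1 2 by (simp add: distrib_left)
  also have "\<dots> \<le> t * (\<epsilon> / 4) + t * aw + t * (\<epsilon> / 4)"
  proof -
    have "t * (lB * t * Z) \<le> t * (\<epsilon> / 4)" using lz t by (intro mult_left_mono) auto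
    then show ?thesis by linarith
  qed
  also have "\<dots> = t * (\<epsilon> / 4 + aw + \<epsilon> / 4)" by (simp add: distrib_left)
  finally have "a \<le> \<epsilon> / 4 + aw + \<epsilon> / 4" using t by (simp add: mult_le_cancel_left)
  then show ?thesis using aw ep by linarith
qed

lemma sum_distinct_nth:
  assumes "distinct es"
  shows "(\<Sum>j<length es. F (es ! j)) = (\<Sum>e\<in>set es. F e)"
  using assms by (induction es) (simp_all add: sum.lessThan_Suc_shift del: sum.lessThan_Suc)



lemma bavg_rep:
  fixes b :: "'w \<Rightarrow> real \<Rightarrow> 'h \<Rightarrow> real"
  assumes tau: "\<tau> > 0" and n: "n \<ge> 1"
  shows "b_avg b \<tau> \<omega> n v = (1 / \<tau>) * (LINT s:{real (n - 1) * \<tau><..<real n * \<tau>}|lborel. b \<omega> s v)"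
proof -
  have "ereal (real (n - 1) * \<tau>) \<le> ereal (real n * \<tau>)" using tau n by (simp add: mult_right_mono)
  then show ?thesis unfolding b_avg_def by (simp add: interval_lebesgue_integral_le_eq)
qed

lemma bavg_lin:
  fixes b :: "'w \<Rightarrow> real \<Rightarrow> 'h::real_vector \<Rightarrow> real"
  assumes Filt: "filtration (space M) F"
    and b_lin: "\<And>\<omega> t x y c. \<omega> \<in> space M \<Longrightarrow> t \<in> {0..T} \<Longrightarrow> x \<in> V \<Longrightarrow> y \<in> V \<Longrightarrow>
                  b \<omega> t (c *\<^sub>R x + y) = c * b \<omega> t x + b \<omega> t y"
    and b_bdd: "\<exists>Cb. \<forall>\<omega>\<in>space M. \<forall>t\<in>{0..T}. \<forall>v\<in>V. \<bar>b \<omega> t v\<bar> \<le> Cb * nV v"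
    and b_prog: "\<And>t v. t \<in> {0..T} \<Longrightarrow> v \<in> V \<Longrightarrow>
                  (\<lambda>(\<omega>, s). b \<omega> s v) \<in> borel_measurable (F t \<Otimes>\<^sub>M restrict_space lborel {0..t})"
    and tau: "\<tau> > 0" and n: "n \<ge> 1" "real n * \<tau> \<le> T"
    and om: "\<omega> \<in> space M" and xy: "x \<in> V" "y \<in> V"
  shows "b_avg b \<tau> \<omega> n (c *\<^sub>R x + y) = c * b_avg b \<tau> \<omega> n x + b_avg b \<tau> \<omega> n y"
proof -
  define A where "A = {real (n - 1) * \<tau><..<real n * \<tau>}"
  have a0: "0 \<le> real (n - 1) * \<tau>" using tau by simp
  have AT: "A \<subseteq> {0..T}" unfolding A_def using a0 n by auto
  have T0: "T \<in> {0..T}" using n tau by (simp add: order_trans[of 0 "real n * \<tau>"])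
  obtain Cb where Cb: "\<forall>\<omega>\<in>space M. \<forall>t\<in>{0..T}. \<forall>v\<in>V. \<bar>b \<omega> t v\<bar> \<le> Cb * nV v" using b_bdd by blast
  have int: "set_integrable lborel A (\<lambda>s. b \<omega> s v)" if v: "v \<in> V" for v
  proof -
    have omF: "\<omega> \<in> space (F T)" using om filtration.space_F[OF Filt] by simp
    have "(\<lambda>s. b \<omega> s v) \<in> borel_measurable (restrict_space lborel {0..T})"
      using measurable_Pair2[OF b_prog[OF T0 v] omF] by simp
    then have m: "(\<lambda>s. if s \<in> {0..T} then b \<omega> s v else 0) \<in> borel_measurable lborel"
      by (subst (asm) measurable_restrict_space_iff) auto
    have I: "integrable lborel (\<lambda>s. indicator A s *\<^sub>R (if s \<in> {0..T} then b \<omega> s v else 0))"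
    proof (rule integrableI_bounded_set_indicator[where B = "Cb * nV v"])
      show "A \<in> sets lborel" unfolding A_def by simp
      show "emeasure lborel A < \<infinity>" unfolding A_def using tau n
        by (simp add: mult_right_mono)
      show "AE s in lborel. s \<in> A \<longrightarrow> norm (if s \<in> {0..T} then b \<omega> s v else 0) \<le> Cb * nV v"
      proof (intro AE_I2 impI)
        fix s assume "s \<in> A"
        then have "s \<in> {0..T}" using AT by blast
        then show "norm (if s \<in> {0..T} then b \<omega> s v else 0) \<le> Cb * nV v" using Cb om v by simp
      qed
    qed (rule m)
    have eqf: "(\<lambda>s. indicator A s *\<^sub>R (if s \<in> {0..T} then b \<omega> s v else 0)) = (\<lambda>s. indicator A s *\<^sub>R b \<omega> s v)"
      by (rule ext) (use AT in \<open>auto simp: indicator_def\<close>)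
    show ?thesis unfolding set_integrable_def eqf[symmetric] by (rule I)
  qed
  have "(LINT s:A|lborel. b \<omega> s (c *\<^sub>R x + y)) = (LINT s:A|lborel. c * b \<omega> s x + b \<omega> s y)"
    by (rule set_lebesgue_integral_cong) (use AT b_lin om xy in \<open>auto simp: A_def\<close>)
  also have "\<dots> = c * (LINT s:A|lborel. b \<omega> s x) + (LINT s:A|lborel. b \<omega> s y)"
    using int[OF xy(1)] int[OF xy(2)] by (subst set_integral_add(2)) auto
  finally have L: "(LINT s:A|lborel. b \<omega> s (c *\<^sub>R x + y)) = c * (LINT s:A|lborel. b \<omega> s x) + (LINT s:A|lborel. b \<omega> s y)" .
  show ?thesis unfolding bavg_rep[OF tau n(1)] A_def[symmetric] L by (simp add: algebra_simps)
qed



lemma bavg_meas: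
  fixes b :: "'w \<Rightarrow> real \<Rightarrow> 'h \<Rightarrow> real"
  assumes b_prog: "\<And>t v. t \<in> {0..T} \<Longrightarrow> v \<in> V \<Longrightarrow>
                  (\<lambda>(\<omega>, s). b \<omega> s v) \<in> borel_measurable (F t \<Otimes>\<^sub>M restrict_space lborel {0..t})"
    and tau: "\<tau> > 0" and n: "n \<ge> 1" "real n * \<tau> \<le> T" and v: "v \<in> V"
  shows "(\<lambda>\<omega>. b_avg b \<tau> \<omega> n v) \<in> borel_measurable (F (real n * \<tau>))"
proof -
  define t where "t = real n * \<tau>"
  define A where "A = {real (n - 1) * \<tau><..<t}"
  have a0: "0 \<le> real (n - 1) * \<tau>" using tau by simp
  have At: "A \<subseteq> {0..t}" unfolding A_def using a0 by auto
  have t: "t \<in> {0..T}" using n tau unfolding t_def by simp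
  interpret R: sigma_finite_measure "restrict_space lborel {0..t}"
    by (rule sigma_finite_measure_restrict_space[OF lborel.sigma_finite_measure_axioms]) simp
  have eq: "b_avg b \<tau> \<omega> n v = (1 / \<tau>) * integral\<^sup>L (restrict_space lborel {0..t}) (\<lambda>s. indicator A s * b \<omega> s v)" for \<omega>
  proof -
    have "integral\<^sup>L (restrict_space lborel {0..t}) (\<lambda>s. indicator A s * b \<omega> s v)
        = integral\<^sup>L lborel (\<lambda>s. indicator {0..t} s *\<^sub>R (indicator A s * b \<omega> s v))"
      by (rule integral_restrict_space) simp
    also have "\<dots> = (LINT s:A|lborel. b \<omega> s v)" unfolding set_lebesgue_integral_def
      by (rule Bochner_Integration.integral_cong) (use At in \<open>auto simp: indicator_def\<close>)
    finally show ?thesis using bavg_rep[OF tau n(1)] unfolding A_def t_def by simp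
  qed
  have "(\<lambda>(\<omega>, s). indicator A s * b \<omega> s v) \<in> borel_measurable (F t \<Otimes>\<^sub>M restrict_space lborel {0..t})"
  proof -
    have i: "(\<lambda>p. indicator A (snd p) :: real) \<in> borel_measurable (F t \<Otimes>\<^sub>M restrict_space lborel {0..t})"
      by (rule measurable_compose[OF measurable_snd]) (rule measurable_restrict_space1, simp add: A_def)
    have "(\<lambda>p. indicator A (snd p) * (\<lambda>(\<omega>, s). b \<omega> s v) p) \<in> borel_measurable (F t \<Otimes>\<^sub>M restrict_space lborel {0..t})"
      using i b_prog[OF t v] by (rule borel_measurable_times)
    then show ?thesis by (simp add: case_prod_beta')
  qed
  then have "(\<lambda>\<omega>. integral\<^sup>L (restrict_space lborel {0..t}) (\<lambda>s. indicator A s * b \<omega> s v)) \<in> borel_measurable (F t)"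
    by (intro R.borel_measurable_lebesgue_integral) simp
  then show ?thesis unfolding eq t_def by simp
qed



theorem lemma3p2:
  fixes V Vh :: "'h::{real_inner,complete_space} set"
    and nV :: "'h \<Rightarrow> real"
    and A :: "'h \<Rightarrow> 'h \<Rightarrow> real"
    and sig :: "'h \<Rightarrow> nat \<Rightarrow> 'h"
    and b :: "'w \<Rightarrow> real \<Rightarrow> 'h \<Rightarrow> real"
    and M :: "'w measure" and F :: "real \<Rightarrow> 'w measure"
    and \<beta> :: "nat \<Rightarrow> real \<Rightarrow> 'w \<Rightarrow> real"
    and u0 :: "'w \<Rightarrow> 'h"
    and p T \<mu> lamD lamA \<kappa> lamB C \<tau> :: real and N r :: nat
  assumes V: "banach_subspace V nV"
    and p: "p > 1" and T: "T > 0"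
    \<comment> \<open>A : V -> V*, i.e. A u is linear and bounded on V; (iv) growth bound\<close>
    and A_lin: "\<And>u x y c. u \<in> V \<Longrightarrow> x \<in> V \<Longrightarrow> y \<in> V \<Longrightarrow> A u (c *\<^sub>R x + y) = c * A u x + A u y"
    and A_iv: "\<And>u v. u \<in> V \<Longrightarrow> v \<in> V \<Longrightarrow> \<bar>A u v\<bar> \<le> C * (nV u + 1) powr (p - 1) * nV v"
    \<comment> \<open>sigma : V -> L_2(K,H)\<close>
    and sig_HS: "\<And>v. v \<in> V \<Longrightarrow> summable (\<lambda>i. (norm (sig v i))\<^sup>2)"
    \<comment> \<open>(i) hemicontinuity\<close>
    and A_i: "\<And>v w z. v \<in> V \<Longrightarrow> w \<in> V \<Longrightarrow> z \<in> V \<Longrightarrow>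
                continuous_on {0..1} (\<lambda>\<epsilon>. A (w + \<epsilon> *\<^sub>R z) v)"
    \<comment> \<open>(ii) monotonicity\<close>
    and lamB_nn: "lamB \<ge> 0"
    and A_ii: "\<And>v w. v \<in> V \<Longrightarrow> w \<in> V \<Longrightarrow>
                 2 * (A v (v - w) - A w (v - w)) + lamB * (norm (v - w))\<^sup>2
                 \<ge> hs_norm2 (\<lambda>i. sig v i - sig w i)"
    \<comment> \<open>(iii) coercivity; lamD stands for the constant lambda * abs D\<close>
    and mu: "\<mu> > 0" and lamD_nn: "lamD \<ge> 0" and lamA_nn: "lamA \<ge> 0" and kap: "\<kappa> \<ge> 0"
    and A_iii: "\<And>v. v \<in> V \<Longrightarrow>
                 A v v + lamA * (norm v)\<^sup>2 \<ge> \<mu> * nV v powr p - lamD + hs_norm2 (sig v) / 2 - \<kappa>"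
    \<comment> \<open>probability space, filtration, independent Brownian motions\<close>
    and P: "prob_space M"
    and Filt: "filtration (space M) F" and F_sub: "\<And>t. sets (F t) \<subseteq> sets M"
    and BM: "\<And>i. brownian_motion M F (\<beta> i)"
    and BM_indep: "prob_space.indep_vars M (\<lambda>_. Pi\<^sub>M UNIV (\<lambda>_. borel)) (\<lambda>i \<omega> t. \<beta> i t \<omega>) UNIV"
    \<comment> \<open>right-hand side b: progressively measurable, bounded in V*, linear\<close>
    and b_lin: "\<And>\<omega> t x y c. \<omega> \<in> space M \<Longrightarrow> t \<in> {0..T} \<Longrightarrow> x \<in> V \<Longrightarrow> y \<in> V \<Longrightarrow>
                  b \<omega> t (c *\<^sub>R x + y) = c * b \<omega> t x + b \<omega> t y"
    and b_bdd: "\<exists>Cb. \<forall>\<omega>\<in>space M. \<forall>t\<in>{0..T}. \<forall>v\<in>V. \<bar>b \<omega> t v\<bar> \<le> Cb * nV v"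
    and b_prog: "\<And>t v. t \<in> {0..T} \<Longrightarrow> v \<in> V \<Longrightarrow>
                  (\<lambda>(\<omega>, s). b \<omega> s v) \<in> borel_measurable (F t \<Otimes>\<^sub>M restrict_space lborel {0..t})"
    \<comment> \<open>finite-dimensional subspace V_h of V\<close>
    and Vh: "subspace Vh" "Vh \<subseteq> V" "\<exists>B. finite B \<and> Vh = span B"
    \<comment> \<open>initial value\<close>
    and u0_meas: "u0 \<in> borel_measurable (F 0)"
    and u0_L2: "integrable M (\<lambda>\<omega>. (norm (u0 \<omega>))\<^sup>2)"
    and u0_Vh: "\<And>\<omega>. \<omega> \<in> space M \<Longrightarrow> u0 \<omega> \<in> Vh"
    \<comment> \<open>time discretisation\<close>
    and N: "N \<ge> 1" and tau: "\<tau> = T / real N" and tau_small: "\<tau> * lamB \<le> 1"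
  shows "(\<exists>u. discrete_solution M Vh A b sig \<beta> N \<tau> r u0 u \<and>
              (\<forall>n\<in>{1..N}. u n \<in> borel_measurable (F (real n * \<tau>)))) \<and>
         (\<forall>u u'. discrete_solution M Vh A b sig \<beta> N \<tau> r u0 u \<and>
                 discrete_solution M Vh A b sig \<beta> N \<tau> r u0 u' \<longrightarrow>
                 (\<forall>n\<in>{1..N}. \<forall>\<omega>\<in>space M. u n \<omega> = u' n \<omega>))"
proof -
  obtain B where B: "finite B" "Vh = span B" using Vh(3) by blast
  obtain E where oE: "orthonormal_set E" and spE: "span E = Vh"
    using gram_schmidt[OF B(1)] B(2) by metis
  have fE: "finite E" and nE: "\<And>e. e \<in> E \<Longrightarrow> norm e = 1"
    using oE unfolding orthonormal_set_def by auto
  have VhE: "Vh = span E" using spE by simp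
  have EVh: "E \<subseteq> Vh" using VhE span_base by blast
  have VhV: "Vh \<subseteq> V" by (rule Vh(2))
  have EV: "E \<subseteq> V" using EVh VhV by blast
  have tau0: "\<tau> > 0" using T N tau by simp
  have Vsub: "subspace V" using nV_props(1)[OF V] .
  have Vnn: "\<And>v. v \<in> V \<Longrightarrow> 0 \<le> nV v" using nV_props(2)[OF V] .
  define Kn where "Kn = (\<Sum>e\<in>E. nV e)"
  have Kn0: "Kn \<ge> 0" unfolding Kn_def using Vnn EV by (intro sum_nonneg) blast
  have nVK: "\<And>x. x \<in> Vh \<Longrightarrow> nV x \<le> Kn * norm x"
    unfolding Kn_def using nV_equiv[OF V oE] VhE VhV by blast
  have Vh_diff: "\<And>x y. x \<in> Vh \<Longrightarrow> y \<in> Vh \<Longrightarrow> x - y \<in> Vh" using Vh(1) by (simp add: subspace_diff)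
  have Vh_add: "\<And>x y. x \<in> Vh \<Longrightarrow> y \<in> Vh \<Longrightarrow> x + y \<in> Vh" using Vh(1) by (simp add: subspace_add)
  have Vh_scale: "\<And>x c. x \<in> Vh \<Longrightarrow> c *\<^sub>R x \<in> Vh" using Vh(1) by (simp add: subspace_scale)
  have Vh0: "0 \<in> Vh" using Vh(1) by (simp add: subspace_0)
  have Alin: "\<And>u x y c. u \<in> Vh \<Longrightarrow> x \<in> Vh \<Longrightarrow> y \<in> Vh \<Longrightarrow> A u (c *\<^sub>R x + y) = c * A u x + A u y"
    using A_lin VhV by blast
  have A0: "\<And>u. u \<in> Vh \<Longrightarrow> A u 0 = 0"
    using Alin[of _ 0 0 1] Vh0 by simp
  have Aneg: "\<And>u z. u \<in> Vh \<Longrightarrow> z \<in> Vh \<Longrightarrow> A u (- z) = - A u z"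
    using Alin[of _ _ 0 "-1"] A0 Vh0 by simp
  have Amono: "\<And>v w. v \<in> Vh \<Longrightarrow> w \<in> Vh \<Longrightarrow> 2 * (A v (v - w) - A w (v - w)) + lamB * (norm (v - w))\<^sup>2 \<ge> 0"
  proof -
    fix v w assume vw: "v \<in> Vh" "w \<in> Vh"
    then have "hs_norm2 (\<lambda>i. sig v i - sig w i) \<ge> 0" using hs_diff(2) sig_HS VhV by blast
    then show "2 * (A v (v - w) - A w (v - w)) + lamB * (norm (v - w))\<^sup>2 \<ge> 0"
      using A_ii[of v w] vw VhV by force
  qed
  have LB: "\<exists>K\<ge>0. \<forall>v\<in>Vh. norm (v - w) \<le> 1 \<longrightarrow> (\<forall>y\<in>Vh. \<bar>A v y\<bar> \<le> K * norm y)" if w: "w \<in> Vh" for w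
  proof (intro exI conjI ballI impI)
    let ?K = "\<bar>C\<bar> * (nV w + Kn + 1) powr (p - 1) * Kn"
    show "?K \<ge> 0" using Kn0 by simp
    fix v y assume v: "v \<in> Vh" and vw: "norm (v - w) \<le> 1" and y: "y \<in> Vh"
    have nvw: "nV v \<le> nV w + Kn"
    proof -
      have "nV v = nV (w + (v - w))" by simp
      also have "\<dots> \<le> nV w + nV (v - w)" using nV_props(4)[OF V, of w "v - w"] w v VhV Vh_diff by blast
      also have "\<dots> \<le> nV w + Kn * norm (v - w)" using nVK[OF Vh_diff[OF v w]] by simp
      also have "\<dots> \<le> nV w + Kn" using vw Kn0 by (simp add: mult_left_le)
      finally show ?thesis .
    qed
    have nv0: "0 \<le> nV v" "0 \<le> nV y" "0 \<le> nV w" using Vnn v y w VhV by blast+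
    have "\<bar>A v y\<bar> \<le> C * (nV v + 1) powr (p - 1) * nV y" using A_iv v y VhV by blast
    also have "\<dots> \<le> \<bar>C\<bar> * (nV v + 1) powr (p - 1) * nV y"
      using nv0 by (intro mult_right_mono) auto
    also have "\<dots> \<le> \<bar>C\<bar> * (nV w + Kn + 1) powr (p - 1) * nV y"
      using nv0 nvw p by (intro mult_right_mono mult_left_mono powr_mono2) auto
    also have "\<dots> \<le> \<bar>C\<bar> * (nV w + Kn + 1) powr (p - 1) * (Kn * norm y)"
      using nVK[OF y] by (intro mult_left_mono) auto
    finally show "\<bar>A v y\<bar> \<le> ?K * norm y" by (simp add: mult.assoc)
  qed
  have up: "\<exists>\<delta>>0. \<forall>u\<in>Vh. norm (u - u0) < \<delta> \<longrightarrow> A u z < A u0 z + \<epsilon>"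
    if u0: "u0 \<in> Vh" and z: "z \<in> Vh" and ep: "\<epsilon> > 0" for u0 z \<epsilon>
  proof -
    have cA: "continuous_on {0..1} (\<lambda>s. A (u0 + s *\<^sub>R z) z)" using A_i u0 z VhV by blast
    have "0 \<in> {0..1::real}" by simp
    moreover have "\<epsilon> / 4 > 0" using ep by simp
    ultimately obtain d1 where d1: "d1 > 0" "\<And>s. s \<in> {0..1} \<Longrightarrow> dist s 0 < d1 \<Longrightarrow> dist (A (u0 + s *\<^sub>R z) z) (A (u0 + 0 *\<^sub>R z) z) < \<epsilon> / 4"
      using cA[unfolded continuous_on_iff, rule_format, of 0 "\<epsilon> / 4"] by blast
    define Z where "Z = (norm z)\<^sup>2"
    have Z0: "Z \<ge> 0" unfolding Z_def by simp
    define t where "t = min (d1 / 2) (min 1 (\<epsilon> / (4 * (lamB * Z + 1))))"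
    have lz1: "lamB * Z + 1 > 0" using lamB_nn Z0 by (simp add: add_nonneg_pos)
    have t0: "t > 0" unfolding t_def using d1 ep lz1 by simp
    have t1: "t \<le> 1" "t < d1" unfolding t_def using d1 by auto
    have "t \<le> \<epsilon> / (4 * (lamB * Z + 1))" unfolding t_def by simp
    then have "t * (4 * (lamB * Z + 1)) \<le> \<epsilon>" using lz1 by (simp add: pos_le_divide_eq)
    then have lz: "lamB * t * Z \<le> \<epsilon> / 4" using t0 by (simp add: algebra_simps)
    have "\<bar>A (u0 + t *\<^sub>R z) z - A u0 z\<bar> < \<epsilon> / 4"
      using d1(2)[of t] t0 t1 by (simp add: dist_real_def)
    then have aw: "A (u0 + t *\<^sub>R z) z < A u0 z + \<epsilon> / 4" unfolding abs_less_iff by linarith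
    define w where "w = u0 + t *\<^sub>R z"
    have w: "w \<in> Vh" unfolding w_def using u0 z Vh_add Vh_scale by blast
    obtain K0 where K0: "K0 \<ge> 0" "\<And>v y. v \<in> Vh \<Longrightarrow> norm (v - u0) \<le> 1 \<Longrightarrow> y \<in> Vh \<Longrightarrow> \<bar>A v y\<bar> \<le> K0 * norm y"
      using LB[OF u0] by blast
    obtain Kw where Kw: "Kw \<ge> 0" "\<And>v y. v \<in> Vh \<Longrightarrow> norm (v - w) \<le> 1 \<Longrightarrow> y \<in> Vh \<Longrightarrow> \<bar>A v y\<bar> \<le> Kw * norm y"
      using LB[OF w] by blast
    define \<delta> where "\<delta> = min 1 (t * \<epsilon> / (4 * (K0 + Kw + lamB + 1)))"
    have M0: "K0 + Kw + lamB + 1 > 0" using K0 Kw lamB_nn by linarith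
    have \<delta>0: "\<delta> > 0" unfolding \<delta>_def using t0 ep M0 by simp
    have \<delta>d: "\<delta> * (K0 + Kw + lamB + 1) \<le> t * \<epsilon> / 4"
    proof -
      have "\<delta> \<le> t * \<epsilon> / (4 * (K0 + Kw + lamB + 1))" unfolding \<delta>_def by simp
      then show ?thesis using M0 by (simp add: pos_le_divide_eq algebra_simps)
    qed
    show ?thesis
    proof (intro exI[of _ \<delta>] conjI ballI impI)
      show "\<delta> > 0" by (rule \<delta>0)
      fix u assume u: "u \<in> Vh" and uu0: "norm (u - u0) < \<delta>"
      define X where "X = norm (u - u0)"
      have X: "0 \<le> X" "X \<le> \<delta>" "\<delta> \<le> 1" using uu0 unfolding X_def \<delta>_def by auto
      have uu0V: "u - u0 \<in> Vh" using u u0 Vh_diff by blast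
      have uw: "u - w = (- t) *\<^sub>R z + (u - u0)" unfolding w_def by (simp add: algebra_simps)
      have e1: "A u (u - w) = - t * A u z + A u (u - u0)" unfolding uw by (rule Alin[OF u z uu0V])
      have e2: "A w (u - w) = - t * A w z + A w (u - u0)" unfolding uw by (rule Alin[OF w z uu0V])
      have b1: "\<bar>A u (u - u0)\<bar> \<le> K0 * X" using K0(2)[OF u _ uu0V] X unfolding X_def by simp
      have b2: "\<bar>A w (u - u0)\<bar> \<le> Kw * X" using Kw(2)[OF w _ uu0V] unfolding X_def by simp
      have nuw: "(norm (u - w))\<^sup>2 \<le> 2 * (X\<^sup>2 + t\<^sup>2 * Z)"
      proof -
        have "norm (u - w) \<le> norm ((- t) *\<^sub>R z) + norm (u - u0)" unfolding uw by (rule norm_triangle_ineq)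
        then have "norm (u - w) \<le> X + t * norm z" unfolding X_def using t0 by simp
        then have "(norm (u - w))\<^sup>2 \<le> (X + t * norm z)\<^sup>2" by (simp add: power_mono)
        also have "\<dots> \<le> 2 * (X\<^sup>2 + t\<^sup>2 * Z)"
        proof -
          have "(X + t * norm z)\<^sup>2 + (X - t * norm z)\<^sup>2 = 2 * (X\<^sup>2 + t\<^sup>2 * Z)"
            unfolding Z_def by (simp add: power2_eq_square algebra_simps)
          moreover have "0 \<le> (X - t * norm z)\<^sup>2" by simp
          ultimately show ?thesis by linarith
        qed
        finally show ?thesis .
      qed
      have mono: "2 * (A u (u - w) - A w (u - w)) + lamB * (norm (u - w))\<^sup>2 \<ge> 0" by (rule Amono[OF u w])
      have "lamB * (norm (u - w))\<^sup>2 \<le> lamB * (2 * (X\<^sup>2 + t\<^sup>2 * Z))" using nuw lamB_nn by (simp add: mult_left_mono)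
      then have main: "t * A u z \<le> (K0 + Kw) * X + t * A w z + lamB * (X\<^sup>2 + t\<^sup>2 * Z)"
        using mono e1 e2 b1 b2 by (simp add: algebra_simps abs_le_iff)
      show "A u z < A u0 z + \<epsilon>"
        by (rule arith_cont[OF t0 X K0(1) Kw(1) lamB_nn Z0 \<delta>d main ep _ lz]) (use aw w_def in simp)
    qed
  qed
  have Acont: "continuous_on Vh (\<lambda>u. A u z)" if z: "z \<in> Vh" for z
    unfolding continuous_on_iff
  proof (intro ballI allI impI)
    fix u0 and \<epsilon> :: real assume u0: "u0 \<in> Vh" and ep: "\<epsilon> > 0"
    have mz: "- z \<in> Vh" using z Vh_scale[of z "-1"] by simp
    obtain d1 where d1: "d1 > 0" "\<forall>u\<in>Vh. norm (u - u0) < d1 \<longrightarrow> A u z < A u0 z + \<epsilon>" using up[OF u0 z ep] by blast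
    obtain d2 where d2: "d2 > 0" "\<forall>u\<in>Vh. norm (u - u0) < d2 \<longrightarrow> A u (- z) < A u0 (- z) + \<epsilon>" using up[OF u0 mz ep] by blast
    show "\<exists>\<delta>>0. \<forall>u\<in>Vh. dist u u0 < \<delta> \<longrightarrow> dist (A u z) (A u0 z) < \<epsilon>"
    proof (intro exI[of _ "min d1 d2"] conjI ballI impI)
      show "min d1 d2 > 0" using d1 d2 by simp
      fix u assume u: "u \<in> Vh" and "dist u u0 < min d1 d2"
      then have "norm (u - u0) < d1" "norm (u - u0) < d2" by (auto simp: dist_norm)
      then have "A u z < A u0 z + \<epsilon>" "A u (- z) < A u0 (- z) + \<epsilon>" using d1 d2 u by auto
      then show "dist (A u z) (A u0 z) < \<epsilon>" using Aneg[OF u z] Aneg[OF u0 z] by (simp add: dist_real_def abs_less_iff)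
    qed
  qed
  define f where "f u v = inner u v + \<tau> * A u v" for u v
  have flin: "\<forall>u\<in>Vh. \<forall>x\<in>Vh. \<forall>y\<in>Vh. \<forall>c. f u (c *\<^sub>R x + y) = c * f u x + f u y"
    unfolding f_def using Alin by (simp add: inner_add_right algebra_simps)
  have fmono: "\<forall>u\<in>Vh. \<forall>u'\<in>Vh. f u (u - u') - f u' (u - u') \<ge> (1/2) * (norm (u - u'))\<^sup>2"
  proof (intro ballI)
    fix u u' assume u: "u \<in> Vh" and u': "u' \<in> Vh"
    define W where "W = (norm (u - u'))\<^sup>2"
    have AW: "2 * (A u (u - u') - A u' (u - u')) \<ge> - lamB * W" using Amono[OF u u'] unfolding W_def by simp
    have "\<tau> * (2 * (A u (u - u') - A u' (u - u'))) \<ge> \<tau> * (- lamB * W)" by (rule mult_left_mono[OF AW]) (use tau0 in simp)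
    moreover have "\<tau> * lamB * W \<le> W"
    proof -
      have "0 \<le> \<tau> * lamB" using tau0 lamB_nn by simp
      moreover have "0 \<le> W" unfolding W_def by simp
      ultimately show ?thesis using mult_left_le_one_le[of W "\<tau> * lamB"] tau_small by simp
    qed
    moreover have "inner u (u - u') - inner u' (u - u') = W" unfolding W_def
      by (simp add: inner_diff_left power2_norm_eq_inner)
    ultimately show "f u (u - u') - f u' (u - u') \<ge> (1/2) * (norm (u - u'))\<^sup>2"
      unfolding f_def W_def by (simp add: algebra_simps)
  qed
  have fcont: "\<forall>v\<in>Vh. continuous_on Vh (\<lambda>u. f u v)"
    unfolding f_def using Acont by (auto intro!: continuous_intros)
  have uniq: "u = u'" if u: "u \<in> Vh" and u': "u' \<in> Vh" and eq: "\<forall>v\<in>Vh. f u v = f u' v" for u u'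
  proof -
    have "f u (u - u') - f u' (u - u') \<ge> (1/2) * (norm (u - u'))\<^sup>2" using fmono u u' by blast
    moreover have "f u (u - u') = f u' (u - u')" using eq Vh_diff[OF u u'] by blast
    ultimately have "(1/2) * (norm (u - u'))\<^sup>2 \<le> 0" by simp
    then show ?thesis by simp
  qed
  have solve: "\<exists>u\<in>Vh. \<forall>v\<in>Vh. f u v = inner y v" for y
  proof -
    have "\<exists>u\<in>span E. \<forall>v\<in>span E. f u v = inner y v"
      by (rule exist_ind[OF fE oE, of "1/2"]) (use flin fmono fcont VhE in \<open>auto simp: inner_add_right\<close>)
    then show ?thesis using VhE by simp
  qed
  define Sol where "Sol y = (SOME u. u \<in> Vh \<and> (\<forall>v\<in>Vh. f u v = inner y v))" for y
  have Sol: "Sol y \<in> Vh" "\<And>v. v \<in> Vh \<Longrightarrow> f (Sol y) v = inner y v" for y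
    using someI_ex[of "\<lambda>u. u \<in> Vh \<and> (\<forall>v\<in>Vh. f u v = inner y v)"] solve[of y] unfolding Sol_def by blast+
  have Sol_lip: "norm (Sol y - Sol y') \<le> 2 * norm (y - y')" for y y'
  proof -
    define w where "w = Sol y - Sol y'"
    have w: "w \<in> Vh" unfolding w_def using Sol Vh_diff by blast
    have "(1/2) * (norm w)\<^sup>2 \<le> f (Sol y) w - f (Sol y') w" using fmono Sol unfolding w_def by blast
    also have "\<dots> = inner (y - y') w" using Sol(2)[OF w] by (simp add: inner_diff_left)
    also have "\<dots> \<le> norm (y - y') * norm w" by (rule norm_cauchy_schwarz)
    finally have "(1/2) * (norm w)\<^sup>2 \<le> norm (y - y') * norm w" .
    then have "norm w \<le> 2 * norm (y - y')"
    proof (cases "norm w = 0")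
      case False
      then have wp: "norm w > 0" by simp
      assume H: "(1/2) * (norm w)\<^sup>2 \<le> norm (y - y') * norm w"
      have "((1/2) * norm w) * norm w \<le> norm (y - y') * norm w" using H by (simp add: power2_eq_square)
      then have "(1/2) * norm w \<le> norm (y - y')" using wp by (simp only: mult_le_cancel_right_pos)
      then show ?thesis by simp
    qed simp
    then show ?thesis unfolding w_def .
  qed
  have Sol_cont: "continuous_on UNIV Sol"
    unfolding continuous_on_iff
  proof (intro ballI allI impI)
    fix y and \<epsilon> :: real assume "\<epsilon> > 0"
    show "\<exists>\<delta>>0. \<forall>y'\<in>UNIV. dist y' y < \<delta> \<longrightarrow> dist (Sol y') (Sol y) < \<epsilon>"
    proof (intro exI[of _ "\<epsilon> / 2"] conjI ballI impI)
      show "\<epsilon> / 2 > 0" using \<open>\<epsilon> > 0\<close> by simp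
      fix y' assume "dist y' y < \<epsilon> / 2"
      then have "2 * norm (y' - y) < \<epsilon>" by (simp add: dist_norm)
      then show "dist (Sol y') (Sol y) < \<epsilon>" using Sol_lip[of y' y] by (simp add: dist_norm)
    qed
  qed
  define R where "R n x \<omega> v = inner x v + \<tau> * b_avg b \<tau> \<omega> n v + (\<Sum>i<r. dBeta \<beta> \<tau> n i \<omega> * inner (sig x i) v)"
    for n x \<omega> v
  have tauN: "real N * \<tau> = T" using tau N by simp
  have Rlin: "\<forall>v1\<in>Vh. \<forall>v2\<in>Vh. \<forall>c. R n x \<omega> (c *\<^sub>R v1 + v2) = c * R n x \<omega> v1 + R n x \<omega> v2"
    if om: "\<omega> \<in> space M" and n1: "1 \<le> n" and nN: "n \<le> N" for n x \<omega>
  proof (intro ballI allI)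
    fix v1 v2 c assume v1: "v1 \<in> Vh" and v2: "v2 \<in> Vh"
    have "real n \<le> real N" using nN by simp
    then have "real n * \<tau> \<le> real N * \<tau>" using tau0 by (simp add: mult_right_mono)
    then have nT: "real n * \<tau> \<le> T" using tauN by simp
    have bl: "b_avg b \<tau> \<omega> n (c *\<^sub>R v1 + v2) = c * b_avg b \<tau> \<omega> n v1 + b_avg b \<tau> \<omega> n v2"
      by (rule bavg_lin[OF Filt b_lin b_bdd b_prog tau0 n1 nT om]) (use v1 v2 VhV in blast)+
    have sl: "(\<Sum>i<r. dBeta \<beta> \<tau> n i \<omega> * inner (sig x i) (c *\<^sub>R v1 + v2))
       = c * (\<Sum>i<r. dBeta \<beta> \<tau> n i \<omega> * inner (sig x i) v1) + (\<Sum>i<r. dBeta \<beta> \<tau> n i \<omega> * inner (sig x i) v2)"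
    proof -
      have "(\<Sum>i<r. dBeta \<beta> \<tau> n i \<omega> * inner (sig x i) (c *\<^sub>R v1 + v2))
         = (\<Sum>i<r. c * (dBeta \<beta> \<tau> n i \<omega> * inner (sig x i) v1) + dBeta \<beta> \<tau> n i \<omega> * inner (sig x i) v2)"
        by (rule sum.cong) (simp_all add: inner_add_right distrib_left)
      also have "\<dots> = c * (\<Sum>i<r. dBeta \<beta> \<tau> n i \<omega> * inner (sig x i) v1) + (\<Sum>i<r. dBeta \<beta> \<tau> n i \<omega> * inner (sig x i) v2)"
        by (simp add: sum.distrib sum_distrib_left)
      finally show ?thesis .
    qed
    show "R n x \<omega> (c *\<^sub>R v1 + v2) = c * R n x \<omega> v1 + R n x \<omega> v2"
      unfolding R_def bl sl by (simp add: inner_add_right algebra_simps)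
  qed
  obtain es where es: "distinct es" "set es = E" using finite_distinct_list[OF fE] by blast
  define k where "k = length es"
  have esE: "\<And>j. j < k \<Longrightarrow> es ! j \<in> E" using es(2) unfolding k_def by auto
  define D where "D n x \<omega> = (\<Sum>j<k. R n x \<omega> (es ! j) *\<^sub>R es ! j)" for n x \<omega>
  have Drep: "inner (D n x \<omega>) v = R n x \<omega> v"
    if om: "\<omega> \<in> space M" and n1: "1 \<le> n" and nN: "n \<le> N" and v: "v \<in> Vh" for n x \<omega> v
  proof -
    have "inner (D n x \<omega>) v = (\<Sum>j<k. R n x \<omega> (es ! j) * inner (es ! j) v)"
      unfolding D_def by (simp add: inner_sum_left)
    also have "\<dots> = (\<Sum>e\<in>E. R n x \<omega> e * inner e v)"
      unfolding k_def es(2)[symmetric] by (rule sum_distinct_nth[OF es(1)])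
    also have "\<dots> = (\<Sum>e\<in>E. inner v e * R n x \<omega> e)" by (rule sum.cong) (simp_all add: inner_commute)
    also have "\<dots> = R n x \<omega> (\<Sum>e\<in>E. inner v e *\<^sub>R e)"
      by (rule lin_sum[OF fE EVh Vh(1) Rlin[OF om n1 nN], symmetric])
    also have "\<dots> = R n x \<omega> v" using expand[OF oE] v VhE by simp
    finally show ?thesis .
  qed
  define uu where "uu = rec_nat u0 (\<lambda>m um \<omega>. Sol (D (Suc m) (um \<omega>) \<omega>))"
  have uu0: "uu 0 = u0" and uuS: "\<And>m. uu (Suc m) = (\<lambda>\<omega>. Sol (D (Suc m) (uu m \<omega>) \<omega>))"
    unfolding uu_def by simp_all
  have uuVh: "uu m \<omega> \<in> Vh" if "\<omega> \<in> space M" for m \<omega>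
    using that u0_Vh Sol(1) by (cases m) (simp_all add: uu0 uuS)
  have feq: "f u v = inner u v + \<tau> * A u v" for u v unfolding f_def ..
  have sol: "discrete_solution M Vh A b sig \<beta> N \<tau> r u0 uu"
  proof -
    have "uu n \<omega> \<in> Vh \<and> (\<forall>v\<in>Vh. inner (uu n \<omega> - uu (n - 1) \<omega>) v + \<tau> * A (uu n \<omega>) v =
                 \<tau> * b_avg b \<tau> \<omega> n v + (\<Sum>i<r. dBeta \<beta> \<tau> n i \<omega> * inner (sig (uu (n - 1) \<omega>) i) v))"
      if n: "n \<in> {1..N}" and om: "\<omega> \<in> space M" for n \<omega>
    proof
      obtain m where nm: "n = Suc m" using n by (cases n) auto
      show "uu n \<omega> \<in> Vh" using uuVh om by blast
      show "\<forall>v\<in>Vh. inner (uu n \<omega> - uu (n - 1) \<omega>) v + \<tau> * A (uu n \<omega>) v =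
                 \<tau> * b_avg b \<tau> \<omega> n v + (\<Sum>i<r. dBeta \<beta> \<tau> n i \<omega> * inner (sig (uu (n - 1) \<omega>) i) v)"
      proof
        fix v assume v: "v \<in> Vh"
        have "f (uu n \<omega>) v = inner (D n (uu m \<omega>) \<omega>) v" unfolding nm uuS using Sol(2)[OF v] by simp
        also have "\<dots> = R n (uu m \<omega>) \<omega> v" using Drep om n v by simp
        finally show "inner (uu n \<omega> - uu (n - 1) \<omega>) v + \<tau> * A (uu n \<omega>) v =
                 \<tau> * b_avg b \<tau> \<omega> n v + (\<Sum>i<r. dBeta \<beta> \<tau> n i \<omega> * inner (sig (uu (n - 1) \<omega>) i) v)"
          unfolding feq R_def using nm by (simp add: inner_diff_left algebra_simps)
      qed
    qed
    then show ?thesis unfolding discrete_solution_def using uu0 by simp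
  qed
  have Fspace: "\<And>t. space (F t) = space M" using filtration.space_F[OF Filt] .
  have Fsub: "subalgebra (F t) (F s)" if "s \<le> t" for s t
    unfolding subalgebra_def using filtration.sets_F_mono[OF Filt that] Fspace by simp
  define Pr where "Pr x = (\<Sum>e\<in>E. inner x e *\<^sub>R e)" for x
  have Pr_cont: "continuous_on UNIV Pr" unfolding Pr_def by (intro continuous_intros)
  have PrVh: "Pr x \<in> Vh" for x unfolding Pr_def VhE by (intro span_sum span_scale span_base) auto
  have Pr_id: "Pr x = x" if "x \<in> Vh" for x unfolding Pr_def using expand[OF oE] that VhE by simp
  have sigc: "continuous_on Vh (\<lambda>x. sig x i)" for i
    unfolding continuous_on_iff
  proof (intro ballI allI impI)
    fix w and \<epsilon> :: real assume w: "w \<in> Vh" and ep: "\<epsilon> > 0"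
    obtain K where K: "K \<ge> 0" "\<And>v y. v \<in> Vh \<Longrightarrow> norm (v - w) \<le> 1 \<Longrightarrow> y \<in> Vh \<Longrightarrow> \<bar>A v y\<bar> \<le> K * norm y"
      using LB[OF w] by blast
    define L where "L = 4 * K + lamB + 1"
    have L0: "L > 0" unfolding L_def using K lamB_nn by linarith
    define \<delta> where "\<delta> = min 1 (\<epsilon>\<^sup>2 / L)"
    have \<delta>0: "\<delta> > 0" unfolding \<delta>_def using ep L0 by simp
    show "\<exists>\<delta>>0. \<forall>v\<in>Vh. dist v w < \<delta> \<longrightarrow> dist (sig v i) (sig w i) < \<epsilon>"
    proof (intro exI[of _ \<delta>] conjI ballI impI)
      show "\<delta> > 0" by (rule \<delta>0)
      fix v assume v: "v \<in> Vh" and "dist v w < \<delta>"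
      then have X: "norm (v - w) < \<delta>" by (simp add: dist_norm)
      define X where "X = norm (v - w)"
      have X1: "X \<le> 1" "X < \<delta>" "0 \<le> X" using X unfolding X_def \<delta>_def by auto
      have vwV: "v - w \<in> Vh" using Vh_diff v w by blast
      have a1: "\<bar>A v (v - w)\<bar> \<le> K * X" using K(2)[OF v _ vwV] X1 unfolding X_def by simp
      have a2: "\<bar>A w (v - w)\<bar> \<le> K * X" using K(2)[OF w _ vwV] unfolding X_def by simp
      have "(norm (sig v i - sig w i))\<^sup>2 \<le> hs_norm2 (\<lambda>i. sig v i - sig w i)"
        using hs_diff(3) sig_HS v w VhV by blast
      also have "\<dots> \<le> 2 * (A v (v - w) - A w (v - w)) + lamB * X\<^sup>2"
        using A_ii[of v w] v w VhV unfolding X_def by blast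
      also have "\<dots> \<le> 4 * K * X + lamB * X"
      proof -
        have "X\<^sup>2 \<le> X" using X1 by (simp add: power2_eq_square mult_left_le_one_le)
        then have "lamB * X\<^sup>2 \<le> lamB * X" using lamB_nn by (simp add: mult_left_mono)
        then show ?thesis using a1 a2 by (simp add: abs_le_iff)
      qed
      also have "\<dots> \<le> L * X" unfolding L_def using X1 by (simp add: algebra_simps)
      also have "\<dots> < L * \<delta>" using X1 L0 by simp
      also have "\<dots> \<le> \<epsilon>\<^sup>2" unfolding \<delta>_def using L0 by (simp add: min_def field_simps)
      finally have "(norm (sig v i - sig w i))\<^sup>2 < \<epsilon>\<^sup>2" .
      then show "dist (sig v i) (sig w i) < \<epsilon>" using ep by (simp add: dist_norm power_less_imp_less_base)
    qed
  qed
  have innsig: "(\<lambda>x. inner (sig (Pr x) i) e) \<in> borel_measurable borel" for i e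
  proof -
    have "continuous_on UNIV (\<lambda>x. sig (Pr x) i)"
      using continuous_on_compose2[OF sigc Pr_cont] PrVh by blast
    then have "continuous_on UNIV (\<lambda>x. inner (sig (Pr x) i) e)" by (intro continuous_intros)
    then show ?thesis by (rule borel_measurable_continuous_onI)
  qed
  have innm: "(\<lambda>x. inner x e) \<in> borel_measurable borel" for e :: 'h
    by (rule borel_measurable_continuous_onI) (intro continuous_intros)
  have Sol_m: "(\<lambda>c::nat \<Rightarrow> real. Sol (\<Sum>j<k. c j *\<^sub>R es ! j)) \<in> borel_measurable borel"
  proof -
    have "continuous_on UNIV (\<lambda>c::nat \<Rightarrow> real. \<Sum>j<k. c j *\<^sub>R es ! j)"
      by (intro continuous_on_sum continuous_on_scaleR continuous_on_product_coordinates continuous_on_const)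
    then have "continuous_on UNIV (\<lambda>c::nat \<Rightarrow> real. Sol (\<Sum>j<k. c j *\<^sub>R es ! j))"
      using continuous_on_compose2[OF Sol_cont] by blast
    then show ?thesis by (rule borel_measurable_continuous_onI)
  qed
  have meas: "uu m \<in> borel_measurable (F (real m * \<tau>))" if "m \<le> N" for m
    using that
  proof (induction m)
    case 0
    then show ?case using u0_meas by (simp add: uu0)
  next
    case (Suc m)
    define t where "t = real (Suc m) * \<tau>"
    have um: "uu m \<in> borel_measurable (F t)"
      by (rule measurable_from_subalg[OF Fsub Suc.IH]) (use Suc.prems tau0 in \<open>simp_all add: t_def\<close>)
    have "real (Suc m) \<le> real N" using Suc.prems by simp
    then have "real (Suc m) * \<tau> \<le> real N * \<tau>" using tau0 by (simp add: mult_right_mono)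
    then have nT: "real (Suc m) * \<tau> \<le> T" using tauN by simp
    have dB: "(\<lambda>\<omega>. dBeta \<beta> \<tau> (Suc m) i \<omega>) \<in> borel_measurable (F t)" for i
    proof (cases "Suc m \<le> 1")
      case True
      then show ?thesis unfolding dBeta_def by simp
    next
      case False
      have b1: "\<beta> i t \<in> borel_measurable (F t)" using BM[of i] tau0 unfolding brownian_motion_def t_def by simp
      have "\<beta> i (real m * \<tau>) \<in> borel_measurable (F (real m * \<tau>))" using BM[of i] tau0 unfolding brownian_motion_def by simp
      then have b2: "\<beta> i (real m * \<tau>) \<in> borel_measurable (F t)"
        by (rule measurable_from_subalg[OF Fsub, rotated]) (use tau0 in \<open>simp add: t_def\<close>)
      show ?thesis unfolding dBeta_def using False b1 b2 by (simp add: t_def borel_measurable_diff)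
    qed
    have sm: "(\<lambda>\<omega>. inner (sig (uu m \<omega>) i) e) \<in> borel_measurable (F t)" for i e
    proof -
      have mc: "(\<lambda>\<omega>. inner (sig (Pr (uu m \<omega>)) i) e) \<in> borel_measurable (F t)"
        by (rule measurable_compose[OF um innsig])
      have eq: "\<And>\<omega>. \<omega> \<in> space (F t) \<Longrightarrow> inner (sig (uu m \<omega>) i) e = inner (sig (Pr (uu m \<omega>)) i) e"
        using Pr_id uuVh Fspace by simp
      show ?thesis by (subst measurable_cong[OF eq], assumption) (rule mc)
    qed
    have cm: "(\<lambda>\<omega>. R (Suc m) (uu m \<omega>) \<omega> e) \<in> borel_measurable (F t)" if e: "e \<in> E" for e
    proof -
      have eV: "e \<in> V" using e EV by blast
      have s1: "1 \<le> Suc m" by simp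
      have "(\<lambda>\<omega>. b_avg b \<tau> \<omega> (Suc m) e) \<in> borel_measurable (F t)"
        unfolding t_def by (rule bavg_meas[OF b_prog tau0 s1 nT eV])
      moreover have "(\<lambda>\<omega>. inner (uu m \<omega>) e) \<in> borel_measurable (F t)" by (rule measurable_compose[OF um innm])
      ultimately show ?thesis unfolding R_def
        by (intro borel_measurable_add borel_measurable_times borel_measurable_sum borel_measurable_const dB sm)
    qed
    define cv where "cv \<omega> = (\<lambda>j. if j < k then R (Suc m) (uu m \<omega>) \<omega> (es ! j) else 0)" for \<omega>
    have cvm: "cv \<in> borel_measurable (F t)"
    proof (rule measurable_coordinatewise_then_product)
      fix j
      show "(\<lambda>\<omega>. cv \<omega> j) \<in> borel_measurable (F t)"
        by (cases "j < k") (simp_all add: cv_def cm esE)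
    qed
    have "uu (Suc m) = (\<lambda>\<omega>. Sol (\<Sum>j<k. cv \<omega> j *\<^sub>R es ! j))"
      unfolding uuS D_def cv_def by (intro ext arg_cong[where f = Sol] sum.cong) auto
    then show ?case using measurable_compose[OF cvm Sol_m] by (simp add: t_def)
  qed
  have part1: "\<exists>u. discrete_solution M Vh A b sig \<beta> N \<tau> r u0 u \<and>
              (\<forall>n\<in>{1..N}. u n \<in> borel_measurable (F (real n * \<tau>)))"
    using sol meas by auto
  have part2: "\<forall>n\<in>{1..N}. \<forall>\<omega>\<in>space M. u n \<omega> = u' n \<omega>"
    if su: "discrete_solution M Vh A b sig \<beta> N \<tau> r u0 u" and su': "discrete_solution M Vh A b sig \<beta> N \<tau> r u0 u'"
    for u u'
  proof -
    have "\<forall>\<omega>\<in>space M. u n \<omega> = u' n \<omega>" if "n \<le> N" for n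
      using that
    proof (induction n)
      case 0
      then show ?case using su su' unfolding discrete_solution_def by simp
    next
      case (Suc m)
      have IH: "\<forall>\<omega>\<in>space M. u m \<omega> = u' m \<omega>" using Suc by simp
      show ?case
      proof
        fix \<omega> assume om: "\<omega> \<in> space M"
        have n: "Suc m \<in> {1..N}" using Suc.prems by simp
        have s1: "u (Suc m) \<omega> \<in> Vh" "\<forall>v\<in>Vh. inner (u (Suc m) \<omega> - u m \<omega>) v + \<tau> * A (u (Suc m) \<omega>) v =
                 \<tau> * b_avg b \<tau> \<omega> (Suc m) v + (\<Sum>i<r. dBeta \<beta> \<tau> (Suc m) i \<omega> * inner (sig (u m \<omega>) i) v)"
        proof -
          have "u (Suc m) \<omega> \<in> Vh \<and> (\<forall>v\<in>Vh. inner (u (Suc m) \<omega> - u (Suc m - 1) \<omega>) v + \<tau> * A (u (Suc m) \<omega>) v =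
                 \<tau> * b_avg b \<tau> \<omega> (Suc m) v + (\<Sum>i<r. dBeta \<beta> \<tau> (Suc m) i \<omega> * inner (sig (u (Suc m - 1) \<omega>) i) v))"
            using su n om unfolding discrete_solution_def by blast
          then show "u (Suc m) \<omega> \<in> Vh" "\<forall>v\<in>Vh. inner (u (Suc m) \<omega> - u m \<omega>) v + \<tau> * A (u (Suc m) \<omega>) v =
                 \<tau> * b_avg b \<tau> \<omega> (Suc m) v + (\<Sum>i<r. dBeta \<beta> \<tau> (Suc m) i \<omega> * inner (sig (u m \<omega>) i) v)"
            by simp_all
        qed
        have s2: "u' (Suc m) \<omega> \<in> Vh" "\<forall>v\<in>Vh. inner (u' (Suc m) \<omega> - u' m \<omega>) v + \<tau> * A (u' (Suc m) \<omega>) v =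
                 \<tau> * b_avg b \<tau> \<omega> (Suc m) v + (\<Sum>i<r. dBeta \<beta> \<tau> (Suc m) i \<omega> * inner (sig (u' m \<omega>) i) v)"
        proof -
          have "u' (Suc m) \<omega> \<in> Vh \<and> (\<forall>v\<in>Vh. inner (u' (Suc m) \<omega> - u' (Suc m - 1) \<omega>) v + \<tau> * A (u' (Suc m) \<omega>) v =
                 \<tau> * b_avg b \<tau> \<omega> (Suc m) v + (\<Sum>i<r. dBeta \<beta> \<tau> (Suc m) i \<omega> * inner (sig (u' (Suc m - 1) \<omega>) i) v))"
            using su' n om unfolding discrete_solution_def by blast
          then show "u' (Suc m) \<omega> \<in> Vh" "\<forall>v\<in>Vh. inner (u' (Suc m) \<omega> - u' m \<omega>) v + \<tau> * A (u' (Suc m) \<omega>) v =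
                 \<tau> * b_avg b \<tau> \<omega> (Suc m) v + (\<Sum>i<r. dBeta \<beta> \<tau> (Suc m) i \<omega> * inner (sig (u' m \<omega>) i) v)"
            by simp_all
        qed
        have "\<forall>v\<in>Vh. f (u (Suc m) \<omega>) v = f (u' (Suc m) \<omega>) v"
        proof
          fix v assume v: "v \<in> Vh"
          show "f (u (Suc m) \<omega>) v = f (u' (Suc m) \<omega>) v"
            using s1(2)[rule_format, OF v] s2(2)[rule_format, OF v] IH om
            unfolding feq by (simp add: inner_diff_left algebra_simps)
        qed
        then show "u (Suc m) \<omega> = u' (Suc m) \<omega>" by (rule uniq[OF s1(1) s2(1)])
      qed
    qed
    then show ?thesis by auto
  qed
  show ?thesis using part1 part2 by blast
qed

end
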